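(* For all $r,t>0$ the function $z\mapsto u(z;r,t)$, $z\in\left[0,\frac{Q(r)P(r)d}{Q(t)P(t)}\right]$, is the profile of a rotationally symmetric hypersurface of constant mean curvature $\eta(t)=\frac{nQ(t)P(t)}{d}$, i.e. $H(u(\cdot;r,t))\equiv\eta(t)$ on this interval, and moreover \[ u_z(0;r,t)=u_z\!\left(\tfrac{Q(r)P(r)d}{Q(t)P(t)};r,t\right)=0 . \]
   Context: Fix an integer $n\ge2$ and $d>0$. Define $Q:(0,\infty)\to\mathbb{R}$ by $Q(t)=\frac{1-t^{n-1}}{1-t^n}$ for $t\neq1$ and $Q(1)=\frac{n-1}{n}$. For $0\le x\le1$, $t>0$ define $R(x;t)=\frac{1}{|1-t|}\sqrt{\left(\frac{(1-(1-t)x)^{n-1}}{1-Q(t)+Q(t)(1-(1-t)x)^n}\right)^2-1}$ for $t\ne1$ and $R(x;1)=\sqrt{(n-1)(1-x)x}$. Let $\zeta(x;t)=\int_x^1R(\tilde x;t)^{-1}\,d\tilde x$ for $0\le x<1$, $\zeta(1;t)=0$, $P(t)=\zeta(0;t)$, and let $\zeta^{-1}(\cdot;t)$ denote the inverse of $x\mapsto\zeta(x;t)$ (so $\zeta^{-1}(\zeta(x;t);t)=x$). For $r,t>0$ and $z\in\left[0,\frac{Q(r)P(r)d}{Q(t)P(t)}\right]$ set $u(z;r,t)=\frac{Q(r)d}{P(t)Q(t)}\left(1-(1-r)\zeta^{-1}\left(\frac{Q(t)P(t)z}{Q(r)d};r\right)\right)$, and let $\eta(t)=\frac{nQ(t)P(t)}{d}$.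 Subscripts denote partial derivatives. For a positive $C^2$ function $f$ of $z$, the mean curvature of the hypersurface of revolution $\{(z,f(z)\theta):\theta\in\mathbb{S}^{n-1}\}\subset\mathbb{R}^{n+1}$ is $H(f)=\frac{-f_{zz}}{(1+f_z^2)^{3/2}}+\frac{n-1}{f\sqrt{1+f_z^2}}$. *)

theory Defs
  imports "HOL-Analysis.Analysis"
begin

definition Qf :: "nat \<Rightarrow> real \<Rightarrow> real" where
  "Qf n t = (if t = 1 then (real n - 1) / real n else (1 - t ^ (n - 1)) / (1 - t ^ n))"

definition Rf :: "nat \<Rightarrow> real \<Rightarrow> real \<Rightarrow> real" where
  "Rf n x t = (if t = 1 then sqrt ((real n - 1) * (1 - x) * x)
     else (1 / \<bar>1 - t\<bar>) * sqrt (((1 - (1 - t) * x) ^ (n - 1)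
              / (1 - Qf n t + Qf n t * (1 - (1 - t) * x) ^ n))\<^sup>2 - 1))"

text \<open>zeta(x;t) = integral from x to 1 of 1/R (improper at the endpoints; HK integral).\<close>
definition zeta :: "nat \<Rightarrow> real \<Rightarrow> real \<Rightarrow> real" where
  "zeta n x t = (if x = 1 then 0 else integral {x..1} (\<lambda>y. 1 / Rf n y t))"

definition Pf :: "nat \<Rightarrow> real \<Rightarrow> real" where
  "Pf n t = zeta n 0 t"

definition zeta_inv :: "nat \<Rightarrow> real \<Rightarrow> real \<Rightarrow> real" where
  "zeta_inv n s t = (THE x. 0 \<le> x \<and> x \<le> 1 \<and> zeta n x t = s)"

definition uf :: "nat \<Rightarrow> real \<Rightarrow> real \<Rightarrow> real \<Rightarrow> real \<Rightarrow> real" where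
  "uf n d z r t = Qf n r * d / (Pf n t * Qf n t)
     * (1 - (1 - r) * zeta_inv n (Qf n t * Pf n t * z / (Qf n r * d)) r)"

definition eta :: "nat \<Rightarrow> real \<Rightarrow> real \<Rightarrow> real" where
  "eta n d t = real n * Qf n t * Pf n t / d"

text \<open>Mean curvature of the hypersurface of revolution with profile value f, f_z = f1, f_zz = f2.\<close>
definition Hcurv :: "nat \<Rightarrow> real \<Rightarrow> real \<Rightarrow> real \<Rightarrow> real" where
  "Hcurv n f f1 f2 = - f2 / (1 + f1\<^sup>2) powr (3/2) + (real n - 1) / (f * sqrt (1 + f1\<^sup>2))"

end

theory Submission
  imports Defs
begin


definition sig :: "real \<Rightarrow> nat \<Rightarrow> real" where "sig p k = (\<Sum>i<k. p^i)"
definition hh :: "nat \<Rightarrow> real \<Rightarrow> real \<Rightarrow> real" where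
  "hh m s p = (\<Sum>k\<le>m. s^k * p^(m-k) * sig p (Suc k))"

lemma sig_Suc: "sig p (Suc k) = sig p k + p^k" by (simp add: sig_def)
lemma sig_Suc': "sig p (Suc k) = 1 + p * sig p k"
proof (induct k)
  case 0 show ?case by (simp add: sig_def)
next
  case (Suc k)
  have "sig p (Suc (Suc k)) = sig p (Suc k) + p^(Suc k)" by (rule sig_Suc)
  also have "\<dots> = 1 + p * sig p k + p * p^k" using Suc by simp
  also have "\<dots> = 1 + p * sig p (Suc k)" by (simp add: sig_Suc algebra_simps)
  finally show ?case .
qed

lemma sig_pos: "p > 0 \<Longrightarrow> k > 0 \<Longrightarrow> sig p k > 0"
  unfolding sig_def by (intro sum_pos) auto

lemma hh_Suc: "hh (Suc m) s p = p * hh m s p + s^(Suc m) * sig p (Suc (Suc m))"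
proof -
  have "hh (Suc m) s p = (\<Sum>k\<le>m. s^k * p^(Suc m-k) * sig p (Suc k)) + s^(Suc m) * sig p (Suc (Suc m))"
    unfolding hh_def by simp
  also have "(\<Sum>k\<le>m. s^k * p^(Suc m-k) * sig p (Suc k)) = p * hh m s p"
    unfolding hh_def sum_distrib_left
    by (intro sum.cong refl) (simp add: Suc_diff_le)
  finally show ?thesis .
qed

lemma hh_pos: "s > 0 \<Longrightarrow> p > 0 \<Longrightarrow> hh m s p > 0"
  unfolding hh_def by (intro sum_pos) (auto intro!: mult_pos_pos sig_pos)

lemma key_identity:
  "sig p (m+2) * s^(m+1) - sig p (m+1) * s^(m+2) - p^(m+1) = (1-s)*(s-p)*hh m s p"
proof (induct m)
  case 0
  then show ?case by (simp add: hh_def sig_def numeral_2_eq_2 algebra_simps power2_eq_square)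
next
  case (Suc m)
  define A where "A = sig p (m+2)"
  define B where "B = sig p (m+1)"
  have e1: "sig p (Suc m + 2) = 1 + p * A" using sig_Suc'[of p "m+2"] by (simp add: A_def)
  have e2: "sig p (Suc m + 1) = A" by (simp add: A_def)
  have e3: "A = 1 + p * B" using sig_Suc'[of p "m+1"] by (simp add: A_def B_def)
  have IH: "A * s^(m+1) - B * s^(m+2) - p^(m+1) = (1-s)*(s-p)*hh m s p"
    using Suc by (simp add: A_def B_def)
  have "(1-s)*(s-p)*hh (Suc m) s p = p * (A * s^(m+1) - B * s^(m+2) - p^(m+1)) + (1-s) * (s-p) * s^(m+1) * A"
  proof -
    have "(1-s)*(s-p)*hh (Suc m) s p = p * ((1-s)*(s-p)*hh m s p) + (1-s) * (s-p) * s^(m+1) * A"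
      by (simp add: hh_Suc A_def algebra_simps)
    then show ?thesis using IH by simp
  qed
  also have "\<dots> = (1 + p * A) * s^(Suc m + 1) - A * s^(Suc m + 2) - p^(Suc m + 1)"
    unfolding e3 by (simp add: algebra_simps)
  finally show ?case unfolding e1 e2 by simp
qed



lemma Q_sig: assumes "p > 0" "n \<ge> 2" shows "Qf n p = sig p (n-1) / sig p n"
proof (cases "p = 1")
  case True then show ?thesis using assms by (simp add: Qf_def sig_def of_nat_diff)
next
  case False
  have "1 - p \<noteq> 0" using False by simp
  have pn: "1 - p^n \<noteq> 0" using False assms power_eq_iff_eq_base[of n p 1] by simp
  have "sig p (n-1) / sig p n = ((1-p^(n-1))/(1-p)) / ((1-p^n)/(1-p))"
    using False by (simp add: sig_def sum_gp_strict)
  also have "\<dots> = (1-p^(n-1))/(1-p^n)" using \<open>1 - p \<noteq> 0\<close> pn by simp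
  finally show ?thesis using False by (simp add: Qf_def)
qed

lemma sig_diff: assumes "n \<ge> 1" shows "sig p n = sig p (n-1) + p^(n-1)"
  using sig_Suc[of p "n-1"] assms by simp

lemma Q_pos: assumes "p > 0" "n \<ge> 2" shows "Qf n p > 0"
  using Q_sig[OF assms] sig_pos[of p "n-1"] sig_pos[of p n] assms by simp

lemma Q_lt1: assumes "p > 0" "n \<ge> 2" shows "Qf n p < 1"
proof -
  have "sig p n = sig p (n-1) + p^(n-1)" using sig_diff assms by simp
  moreover have "p^(n-1) > 0" using assms by simp
  ultimately show ?thesis using Q_sig[OF assms] sig_pos[of p "n-1"] sig_pos[of p n] assms by simp
qed

definition DD :: "nat \<Rightarrow> real \<Rightarrow> real \<Rightarrow> real" where
  "DD n p s = 1 - Qf n p + Qf n p * s^n"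

lemma DD_pos: assumes "p > 0" "n \<ge> 2" "s \<ge> 0" shows "DD n p s > 0"
proof -
  have "Qf n p * s^n \<ge> 0" using Q_pos[OF assms(1,2)] assms(3) by simp
  then show ?thesis using Q_lt1[OF assms(1,2)] unfolding DD_def by linarith
qed

lemma gap: assumes "p > 0" "n \<ge> 2"
  shows "sig p n * (s^(n-1) - DD n p s) = (1-s)*(s-p)*hh (n-2) s p"
proof -
  obtain m where m: "n = m + 2" using assms by (metis add.commute le_Suc_ex)
  have sn: "sig p n > 0" using sig_pos assms by simp
  have "sig p n * (s^(n-1) - DD n p s) = sig p n * s^(n-1) - sig p n + sig p (n-1) - sig p (n-1) * s^n"
    unfolding DD_def Q_sig[OF assms] using sn by (simp add: field_simps)
  also have "\<dots> = sig p n * s^(n-1) - sig p (n-1) * s^n - p^(n-1)"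
    using sig_diff[of n p] assms by simp
  also have "\<dots> = (1-s)*(s-p)*hh (n-2) s p"
    using key_identity[of p m s] m by (simp add: numeral_2_eq_2)
  finally show ?thesis .
qed

definition KK :: "nat \<Rightarrow> real \<Rightarrow> real \<Rightarrow> real" where
  "KK n p x = (if p = 1 then real n - 1 else
     hh (n-2) (1-(1-p)*x) p * ((1-(1-p)*x)^(n-1) + DD n p (1-(1-p)*x))
       / (sig p n * (DD n p (1-(1-p)*x))^2))"

lemma s_pos: fixes p x :: real assumes "p > 0" "x \<in> {0..1}" shows "1-(1-p)*x > 0"
proof -
  have "1-(1-p)*x = (1-x) + p*x" by (simp add: algebra_simps)
  moreover have "p * x \<ge> 0" using assms by simp
  moreover have "(1-x) + p*x > 0"
  proof (cases "x = 1")
    case True then show ?thesis using assms by simp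
  next
    case False then have "x < 1" using assms by simp
    then show ?thesis using \<open>p * x \<ge> 0\<close> by linarith
  qed
  ultimately show ?thesis by simp
qed

lemma KK_pos: assumes "p > 0" "n \<ge> 2" "x \<in> {0..1}" shows "KK n p x > 0"
proof (cases "p = 1")
  case True then show ?thesis using assms by (simp add: KK_def)
next
  case False
  define s where "s = 1-(1-p)*x"
  have s: "s > 0" using s_pos assms s_def by simp
  have "hh (n-2) s p > 0" using hh_pos s assms by simp
  moreover have "DD n p s > 0" using DD_pos s assms by simp
  moreover have "sig p n > 0" using sig_pos assms by simp
  moreover have "s^(n-1) > 0" using s by simp
  ultimately show ?thesis using False unfolding KK_def s_def[symmetric]
    by (simp add: add_pos_pos)
qed

lemma KK_cont: assumes "p > 0" "n \<ge> 2" shows "continuous_on {0..1} (KK n p)"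
proof (cases "p = 1")
  case True then show ?thesis by (simp add: KK_def)
next
  case False
  have "continuous_on {0..1} (\<lambda>x. hh (n-2) (1-(1-p)*x) p * ((1-(1-p)*x)^(n-1) + DD n p (1-(1-p)*x))
       / (sig p n * (DD n p (1-(1-p)*x))^2))"
  proof -
    have "\<forall>x\<in>{0..1}. DD n p (1-(1-p)*x) > 0"
      using DD_pos[OF assms] s_pos[OF assms(1)] less_imp_le by blast
    then have "\<forall>x\<in>{0..1}. sig p n * (DD n p (1-(1-p)*x))^2 \<noteq> 0"
      using sig_pos[of p n] assms by auto
    then show ?thesis unfolding hh_def DD_def
      by (intro continuous_intros) auto
  qed
  then show ?thesis using False unfolding KK_def by simp
qed

lemma Rf_eq: assumes "p > 0" "n \<ge> 2" "x \<in> {0..1}"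
  shows "Rf n x p = sqrt (x*(1-x)*KK n p x)"
proof (cases "p = 1")
  case True then show ?thesis by (simp add: Rf_def KK_def algebra_simps)
next
  case False
  define s where "s = 1-(1-p)*x"
  have s: "s > 0" using s_pos assms s_def by simp
  have D: "DD n p s > 0" using DD_pos s assms by simp
  have sg: "sig p n > 0" using sig_pos assms by simp
  have g: "s^(n-1) - DD n p s = (1-p)^2*x*(1-x)*hh (n-2) s p / sig p n"
    using gap[OF assms(1,2), of s] sg unfolding s_def by (simp add: field_simps power2_eq_square)
  have "(s^(n-1) / DD n p s)^2 - 1 = (s^(n-1) - DD n p s)*(s^(n-1) + DD n p s)/(DD n p s)^2"
    using D by (simp add: field_simps power2_eq_square)
  also have "\<dots> = ((1-p)^2*x*(1-x)*hh (n-2) s p / sig p n) * (s^(n-1) + DD n p s) / (DD n p s)^2"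
    unfolding g by simp
  also have "\<dots> = (1-p)^2 * (x*(1-x)*(hh (n-2) s p * (s^(n-1) + DD n p s) / (sig p n * (DD n p s)^2)))"
    using sg D by (simp add: field_simps)
  also have "\<dots> = (1-p)^2 * (x*(1-x)*KK n p x)"
    using False by (simp add: KK_def s_def)
  finally have e: "(s^(n-1) / DD n p s)^2 - 1 = (1-p)^2 * (x*(1-x)*KK n p x)" .
  have "Rf n x p = (1 / \<bar>1 - p\<bar>) * sqrt ((1-p)^2 * (x*(1-x)*KK n p x))"
    using False e unfolding Rf_def DD_def s_def by simp
  also have "\<dots> = sqrt (x*(1-x)*KK n p x)"
    using False by (simp add: real_sqrt_mult)
  finally show ?thesis .
qed

lemma Rf_cont: assumes "p > 0" "n \<ge> 2" shows "continuous_on {0..1} (\<lambda>x. Rf n x p)"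
proof -
  have "continuous_on {0..1} (\<lambda>x. sqrt (x*(1-x)*KK n p x))"
    using KK_cont[OF assms] by (intro continuous_intros) auto
  then show ?thesis by (rule continuous_on_eq) (use Rf_eq[OF assms] in auto)
qed

lemma Rf_pos: assumes "p > 0" "n \<ge> 2" "x \<in> {0<..<1}" shows "Rf n x p > 0"
  using Rf_eq[OF assms(1,2), of x] KK_pos[OF assms(1,2), of x] assms(3) by simp

lemma Rf_0: assumes "p > 0" "n \<ge> 2" shows "Rf n 0 p = 0" "Rf n 1 p = 0"
  using Rf_eq[OF assms] by auto



lemma invsqrt_integrable: "(\<lambda>y::real. 1 / sqrt (y*(1-y))) integrable_on {0..1}"
proof -
  have "((\<lambda>y::real. 1 / sqrt (y*(1-y))) has_integral (arcsin (2*1-1) - arcsin (2*0-1))) {0..1}"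
  proof (rule fundamental_theorem_of_calculus_interior)
    show "continuous_on {0..1} (\<lambda>y::real. arcsin (2*y-1))"
      by (intro continuous_intros) auto
    fix y :: real assume y: "y \<in> {0<..<1}"
    have "((\<lambda>y. arcsin (2*y-1)) has_real_derivative inverse (sqrt (1 - (2*y-1)^2)) * 2) (at y)"
      using y by (auto intro!: derivative_eq_intros DERIV_arcsin[THEN DERIV_chain2])
    moreover have "inverse (sqrt (1 - (2*y-1)^2)) * 2 = 1 / sqrt (y*(1-y))"
    proof -
      have "1 - (2*y-1)^2 = 4 * (y*(1-y))" by (simp add: algebra_simps power2_eq_square)
      then have "sqrt (1 - (2*y-1)^2) = 2 * sqrt (y*(1-y))" by (simp add: real_sqrt_mult)
      then show ?thesis by (simp add: field_simps)
    qed
    ultimately show "((\<lambda>y. arcsin (2*y-1)) has_vector_derivative 1 / sqrt (y*(1-y))) (at y)"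
      by (simp add: has_real_derivative_iff_has_vector_derivative)
  qed simp
  then show ?thesis by blast
qed

context
  fixes n :: nat and p :: real
  assumes n: "n \<ge> 2" and p: "p > 0"
begin

lemma KK_bounds: obtains c C where "c > 0" "\<And>x. x \<in> {0..1} \<Longrightarrow> c \<le> KK n p x \<and> KK n p x \<le> C"
proof -
  obtain x0 where x0: "x0 \<in> {0..1}" "\<forall>y\<in>{0..1}. KK n p x0 \<le> KK n p y"
    using continuous_attains_inf[of "{0..1::real}" "KK n p"] KK_cont[OF p n] by auto
  obtain x1 where x1: "x1 \<in> {0..1}" "\<forall>y\<in>{0..1}. KK n p y \<le> KK n p x1"
    using continuous_attains_sup[of "{0..1::real}" "KK n p"] KK_cont[OF p n] by auto
  show ?thesis
    using that[of "KK n p x0" "KK n p x1"] x0 x1 KK_pos[OF p n x0(1)] by auto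
qed

definition ff where "ff y = 1 / Rf n y p"

lemma ff_cont: "continuous_on {0<..<1} ff"
proof -
  have "continuous_on {0<..<1} (\<lambda>x. Rf n x p)"
    using Rf_cont[OF p n] by (rule continuous_on_subset) auto
  moreover have "\<forall>x\<in>{0<..<1}. Rf n x p \<noteq> 0" using Rf_pos[OF p n] by force
  ultimately show ?thesis unfolding ff_def
    by (intro continuous_intros) auto
qed

lemma ff_pos: "y \<in> {0<..<1} \<Longrightarrow> ff y > 0"
  unfolding ff_def using Rf_pos[OF p n] by simp

lemma ff_integrable: "ff integrable_on {0..1}"
proof -
  obtain c C where c: "c > 0" "\<And>x. x \<in> {0..1} \<Longrightarrow> c \<le> KK n p x \<and> KK n p x \<le> C"
    using KK_bounds by blast
  have S: "{0<..<1::real} \<in> sets lebesgue" by simp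
  have i1: "(\<lambda>y. (1 / sqrt c) *\<^sub>R (1 / sqrt (y*(1-y)))) integrable_on {0<..<1}"
    using integrable_cmul[OF invsqrt_integrable] integrable_on_Icc_iff_Ioo by blast
  have m1: "ff \<in> borel_measurable (lebesgue_on {0<..<1})"
    by (rule continuous_imp_measurable_on_sets_lebesgue[OF ff_cont S])
  have bnd: "\<bar>ff y\<bar> \<le> (1 / sqrt c) *\<^sub>R (1 / sqrt (y*(1-y)))" if y: "y \<in> {0<..<1}" for y
  proof -
    have yy: "y*(1-y) > 0" using y by simp
    have "c \<le> KK n p y" using c y by auto
    then have "c*(y*(1-y)) \<le> KK n p y * (y*(1-y))"
      using yy by (intro mult_right_mono) auto
    then have "sqrt c * sqrt (y*(1-y)) \<le> sqrt (y*(1-y)*KK n p y)"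
      by (simp add: real_sqrt_mult[symmetric] mult.commute)
    moreover have "sqrt c * sqrt (y*(1-y)) > 0" using c yy by simp
    moreover have "sqrt (y*(1-y)*KK n p y) > 0" using yy KK_pos[OF p n, of y] y by simp
    ultimately have "1 / sqrt (y*(1-y)*KK n p y) \<le> 1 / (sqrt c * sqrt (y*(1-y)))"
      by (intro divide_left_mono) auto
    then show ?thesis using ff_pos[OF y] Rf_eq[OF p n, of y] y unfolding ff_def by simp
  qed
  have "ff integrable_on {0<..<1}"
    by (rule measurable_bounded_by_integrable_imp_integrable_real[OF m1 i1 bnd S])
  then show ?thesis using integrable_on_Icc_iff_Ioo by blast
qed

lemma ff_lower: obtains m where "m > 0" "\<And>y. y \<in> {0<..<1} \<Longrightarrow> m \<le> ff y"
proof -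
  obtain c C where c: "c > 0" "\<And>x. x \<in> {0..1} \<Longrightarrow> c \<le> KK n p x \<and> KK n p x \<le> C"
    using KK_bounds by blast
  have C: "C > 0" using c(2)[of 0] c(1) by auto
  show ?thesis
  proof (rule that[of "1 / sqrt C"])
    show "1 / sqrt C > 0" using C by simp
    fix y :: real assume y: "y \<in> {0<..<1}"
    have yy: "y*(1-y) > 0" using y by simp
    have "y*(1-y) \<le> y*1" using y by (intro mult_left_mono) auto
    moreover have "y < 1" using y by simp
    ultimately have yy2: "y*(1-y) \<le> 1" by linarith
    have "KK n p y \<le> C" "KK n p y > 0" using c y KK_pos[OF p n, of y] by auto
    then have "y*(1-y)*KK n p y \<le> 1 * C"
      using yy yy2 by (intro mult_mono) auto
    then have "y*(1-y)*KK n p y \<le> C" by simp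
    then have "sqrt (y*(1-y)*KK n p y) \<le> sqrt C" by simp
    moreover have "sqrt (y*(1-y)*KK n p y) > 0" using yy \<open>KK n p y > 0\<close> by simp
    ultimately show "1 / sqrt C \<le> ff y"
      using Rf_eq[OF p n, of y] y unfolding ff_def by (simp add: frac_le)
  qed
qed

lemma ff_eq: "ff = (\<lambda>y. 1 / Rf n y p)" by (rule ext) (simp add: ff_def)

definition ZZ where "ZZ x = integral {x..1} ff"

lemma zeta_ZZ: "x \<in> {0..1} \<Longrightarrow> zeta n x p = ZZ x"
  by (simp add: zeta_def ZZ_def ff_eq)

lemma ZZ_cont: "continuous_on {0..1} ZZ"
  unfolding ZZ_def by (rule indefinite_integral_continuous_1'[OF ff_integrable])

lemma ff_int_sub: "0 \<le> (a::real) \<Longrightarrow> b \<le> 1 \<Longrightarrow> ff integrable_on {a..b}"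
  by (rule integrable_on_subinterval[OF ff_integrable]) auto

lemma ZZ_diff: assumes "0 \<le> x" "x \<le> y" "y \<le> 1" shows "ZZ x - ZZ y = integral {x..y} ff"
  using Henstock_Kurzweil_Integration.integral_combine[where a=x and c=y and b=1 and f=ff] ff_int_sub assms unfolding ZZ_def by simp

lemma ZZ_strict: assumes "0 \<le> x" "x < y" "y \<le> 1" shows "ZZ y < ZZ x"
proof -
  obtain m where m: "m > 0" "\<And>y. y \<in> {0<..<1} \<Longrightarrow> m \<le> ff y" using ff_lower by blast
  have "integral {x<..<y} (\<lambda>_. m) \<le> integral {x<..<y} ff"
    apply (rule integral_le)
    using ff_int_sub[of x y] assms integrable_on_Icc_iff_Ioo[of ff x y]
      integrable_on_Icc_iff_Ioo[of "\<lambda>_. m" x y] m by auto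
  then have "(y - x) * m \<le> integral {x..y} ff"
    using assms by (simp add: integral_open_interval_real[symmetric])
  moreover have "(y - x) * m > 0" using m assms by simp
  ultimately show ?thesis using ZZ_diff[of x y] assms by simp
qed

lemma ZZ_1: "ZZ 1 = 0" by (simp add: ZZ_def)

lemma ZZ_deriv: assumes x: "x \<in> {0<..<1}" shows "(ZZ has_real_derivative - ff x) (at x)"
proof -
  define a where "a = x/2"
  define b where "b = (x+1)/2"
  have ab: "0 < a" "a < x" "x < b" "b < 1" using x by (auto simp: a_def b_def)
  have cf: "continuous_on {a..b} ff" using ff_cont by (rule continuous_on_subset) (use ab in auto)
  have "((\<lambda>y. integral {y..b} ff) has_real_derivative - ff x) (at x within {a..b})"
    using integral_has_real_derivative'[OF cf] ab by auto
  then have d1: "((\<lambda>y. integral {y..b} ff) has_real_derivative - ff x) (at x)"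
    using at_within_interior[of x "{a..b}"] ab by simp
  have d2: "((\<lambda>y. integral {y..b} ff + integral {b..1} ff) has_real_derivative - ff x) (at x)"
    using DERIV_add[OF d1 DERIV_const[of "integral {b..1} ff" "at x"]] by simp
  show ?thesis
  proof (rule has_field_derivative_transform_within_open[OF d2, of "{a<..<b}"])
    fix y assume y: "y \<in> {a<..<b}"
    have "y \<ge> 0" "y \<le> b" using y ab by auto
    moreover have "ff integrable_on {y..1}" using ff_int_sub[of y 1] \<open>y \<ge> 0\<close> by simp
    ultimately show "integral {y..b} ff + integral {b..1} ff = ZZ y"
      using Henstock_Kurzweil_Integration.integral_combine[where a=y and c=b and b=1 and f=ff] ab unfolding ZZ_def by simp
  qed (use ab in auto)
qed

lemma Pf_pos: "Pf n p > 0" and Pf_ZZ: "Pf n p = ZZ 0"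
  using ZZ_strict[of 0 1] ZZ_1 zeta_ZZ[of 0] unfolding Pf_def by auto

end



lemma deriv_limit:
  fixes f g :: "real \<Rightarrow> real"
  assumes ab: "a < b" and cf: "continuous_on {a..b} f" and cg: "continuous_on {a..b} g"
    and d: "\<And>x. x \<in> {a<..<b} \<Longrightarrow> (f has_real_derivative g x) (at x)"
    and x: "x \<in> {a..b}"
  shows "(f has_real_derivative g x) (at x within {a..b})"
  unfolding has_field_derivative_iff Lim_within
proof (intro allI impI)
  fix e :: real assume e: "e > 0"
  obtain dd where dd: "dd > 0" "\<forall>y\<in>{a..b}. dist y x < dd \<longrightarrow> dist (g y) (g x) < e"
    using cg x e unfolding continuous_on_iff by metis
  have mv: "\<exists>z. u < z \<and> z < v \<and> (f v - f u) / (v - u) = g z"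
    if uv: "a \<le> u" "u < v" "v \<le> b" for u v
  proof -
    have "continuous_on {u..v} f" using cf by (rule continuous_on_subset) (use uv in auto)
    moreover have "f differentiable (at y)" if "u < y" "y < v" for y
      using d[of y] that uv real_differentiable_def by fastforce
    ultimately obtain l z where z: "u < z" "z < v" "DERIV f z :> l" "f v - f u = (v - u) * l"
      using MVT[OF uv(2)] by blast
    have "DERIV f z :> g z" using d[of z] z uv by auto
    then have "l = g z" using DERIV_unique z(3) by blast
    then show ?thesis using z uv by auto
  qed
  show "\<exists>d>0. \<forall>y\<in>{a..b}. 0 < dist y x \<and> dist y x < d \<longrightarrow> dist ((f y - f x) / (y - x)) (g x) < e"
  proof (intro exI[of _ dd] conjI ballI impI)
    fix y assume y: "y \<in> {a..b}" and yd: "0 < dist y x \<and> dist y x < dd"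
    show "dist ((f y - f x) / (y - x)) (g x) < e"
    proof (cases "x < y")
      case True
      then obtain z where z: "x < z" "z < y" "(f y - f x) / (y - x) = g z"
        using mv[of x y] x y by auto
      have "dist z x < dd" using z yd True by (auto simp: dist_real_def)
      then show ?thesis using z dd x y by auto
    next
      case False
      then have "y < x" using yd by auto
      then obtain z where z: "y < z" "z < x" "(f x - f y) / (x - y) = g z"
        using mv[of y x] x y by auto
      have "(f y - f x) / (y - x) = (f x - f y) / (x - y)"
        by (metis minus_diff_eq minus_divide_divide)
      moreover have "dist z x < dd" using z yd \<open>y < x\<close> by (auto simp: dist_real_def)
      ultimately show ?thesis using z dd x y by auto
    qed
  qed (use dd in auto)
qed

context
  fixes n :: nat and p :: real
  assumes n: "n \<ge> 2" and p: "p > 0"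
begin

abbreviation "PP \<equiv> Pf n p"

lemma ZZ_range: assumes "x \<in> {0..1}" shows "ZZ n p x \<in> {0..PP}"
proof -
  have "ZZ n p 1 \<le> ZZ n p x"
  proof (cases "x = 1")
    case False then show ?thesis using ZZ_strict[OF n p, of x 1] assms by auto
  qed simp
  moreover have "ZZ n p x \<le> ZZ n p 0"
  proof (cases "x = 0")
    case False then show ?thesis using ZZ_strict[OF n p, of 0 x] assms by auto
  qed simp
  ultimately
  show ?thesis using ZZ_1[OF n p] Pf_ZZ[OF n p] by auto
qed

lemma ZZ_inj: "x \<in> {0..1} \<Longrightarrow> y \<in> {0..1} \<Longrightarrow> ZZ n p x = ZZ n p y \<Longrightarrow> x = y"
  using ZZ_strict[OF n p, of x y] ZZ_strict[OF n p, of y x]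
  by (metis atLeastAtMost_iff linorder_neqE_linordered_idom order_less_irrefl)

lemma ZZ_onto: assumes "w \<in> {0..PP}" shows "\<exists>x\<in>{0..1}. ZZ n p x = w"
  using IVT2'[of "ZZ n p" 1 w 0] ZZ_cont[OF n p] ZZ_1[OF n p] Pf_ZZ[OF n p] assms by auto

definition XX where "XX w = zeta_inv n w p"

lemma XX_prop: assumes "w \<in> {0..PP}" shows "XX w \<in> {0..1}" "ZZ n p (XX w) = w"
proof -
  obtain x where x: "x \<in> {0..1}" "ZZ n p x = w" using ZZ_onto assms by blast
  have "XX w = x" unfolding XX_def zeta_inv_def
  proof (rule the_equality)
    show "0 \<le> x \<and> x \<le> 1 \<and> zeta n x p = w" using x zeta_ZZ[OF n p] by auto
    fix y assume "0 \<le> y \<and> y \<le> 1 \<and> zeta n y p = w"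
    then show "y = x" using ZZ_inj[of y x] x zeta_ZZ[OF n p, of y] by auto
  qed
  then show "XX w \<in> {0..1}" "ZZ n p (XX w) = w" using x by auto
qed

lemma XX_ZZ: "x \<in> {0..1} \<Longrightarrow> XX (ZZ n p x) = x"
  using XX_prop[OF ZZ_range] ZZ_inj ZZ_range by blast

lemma XX_0: "XX 0 = 1" using XX_ZZ[of 1] ZZ_1[OF n p] by simp
lemma XX_P: "XX PP = 0" using XX_ZZ[of 0] Pf_ZZ[OF n p] by simp

lemma PP_pos: "PP > 0" using Pf_pos[OF n p] .

lemma ZZ_image: "ZZ n p ` {0..1} = {0..PP}"
proof
  show "ZZ n p ` {0..1} \<subseteq> {0..PP}" using ZZ_range by blast
  show "{0..PP} \<subseteq> ZZ n p ` {0..1}"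
  proof
    fix w assume "w \<in> {0..PP}"
    then obtain x where "x \<in> {0..1}" "ZZ n p x = w" using ZZ_onto by blast
    then show "w \<in> ZZ n p ` {0..1}" by (metis rev_image_eqI)
  qed
qed

lemma XX_cont: "continuous_on {0..PP} XX"
proof -
  have "continuous_on (ZZ n p ` {0..1}) XX"
    by (rule continuous_on_inv[OF ZZ_cont[OF n p] compact_Icc]) (simp add: XX_ZZ)
  then show ?thesis by (simp add: ZZ_image)
qed

lemma XX_interior: assumes "w \<in> {0<..<PP}" shows "XX w \<in> {0<..<1}"
proof -
  have "XX w \<in> {0..1}" using XX_prop assms by auto
  moreover have "XX w \<noteq> 1" using XX_prop(2)[of w] ZZ_1[OF n p] assms by auto
  moreover have "XX w \<noteq> 0" using XX_prop(2)[of w] Pf_ZZ[OF n p] assms by auto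
  ultimately show ?thesis by auto
qed

lemma XX_deriv_int: assumes w: "w \<in> {0<..<PP}"
  shows "(XX has_real_derivative - Rf n (XX w) p) (at w)"
proof -
  have xi: "XX w \<in> {0<..<1}" using XX_interior w by blast
  have "(XX has_real_derivative inverse (- ff n p (XX w))) (at w)"
  proof (rule DERIV_inverse_function[where a=0 and b=PP])
    show "(ZZ n p has_real_derivative - ff n p (XX w)) (at (XX w))" using ZZ_deriv[OF n p xi] .
    show "- ff n p (XX w) \<noteq> 0" using ff_pos[OF n p xi] by simp
    show "0 < w" "w < PP" using w by auto
    show "ZZ n p (XX y) = y" if "0 < y" "y < PP" for y using XX_prop that by auto
    show "isCont XX w"
      using continuous_on_interior[OF XX_cont, of w] w by simp
  qed
  moreover have "inverse (- ff n p (XX w)) = - Rf n (XX w) p"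
    using Rf_pos[OF p n xi] by (simp add: ff_eq[OF n p])
  ultimately show ?thesis by simp
qed

lemma Rf_XX_cont: "continuous_on {0..PP} (\<lambda>w. Rf n (XX w) p)"
proof -
  have "XX ` {0..PP} \<subseteq> {0..1}" using XX_prop by blast
  then show ?thesis using continuous_on_compose2[OF Rf_cont[OF p n] XX_cont] by blast
qed

lemma XX_deriv: assumes w: "w \<in> {0..PP}"
  shows "(XX has_real_derivative - Rf n (XX w) p) (at w within {0..PP})"
proof -
  have "continuous_on {0..PP} (\<lambda>w. - Rf n (XX w) p)" using continuous_on_minus[OF Rf_XX_cont] .
  then show ?thesis by (rule deriv_limit[OF PP_pos XX_cont _ XX_deriv_int w])
qed

end



context
  fixes n :: nat and p :: real
  assumes n: "n \<ge> 2" and p: "p > 0" and p1: "p \<noteq> 1"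
begin

definition WW where "WW s = s^(n-1) / DD n p s"
definition gD where "gD s = Qf n p * (real n * s^(n - Suc 0))"
definition WP where "WP s = (real (n-1) * s^(n-1-1) * DD n p s - gD s * s^(n-1)) / (DD n p s)^2"
definition FF where "FF x = WW (1-(1-p)*x) * WP (1-(1-p)*x)"

lemma W_eq: assumes x: "x \<in> {0..1}"
  shows "(WW (1-(1-p)*x))^2 - 1 = (1-p)^2 * (x*(1-x)*KK n p x)"
proof -
  define s where "s = 1-(1-p)*x"
  have s: "s > 0" using s_pos p x s_def by simp
  have D: "DD n p s > 0" using DD_pos s p n by simp
  have sg: "sig p n > 0" using sig_pos p n by simp
  have g: "s^(n-1) - DD n p s = (1-p)^2*x*(1-x)*hh (n-2) s p / sig p n"
    using gap[OF p n, of s] sg unfolding s_def by (simp add: field_simps power2_eq_square)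
  have "(s^(n-1) / DD n p s)^2 - 1 = (s^(n-1) - DD n p s)*(s^(n-1) + DD n p s)/(DD n p s)^2"
    using D by (simp add: field_simps power2_eq_square)
  also have "\<dots> = ((1-p)^2*x*(1-x)*hh (n-2) s p / sig p n) * (s^(n-1) + DD n p s) / (DD n p s)^2"
    unfolding g by simp
  also have "\<dots> = (1-p)^2 * (x*(1-x)*(hh (n-2) s p * (s^(n-1) + DD n p s) / (sig p n * (DD n p s)^2)))"
    using sg D by (simp add: field_simps)
  also have "\<dots> = (1-p)^2 * (x*(1-x)*KK n p x)"
    using p1 by (simp add: KK_def s_def)
  finally show ?thesis unfolding WW_def s_def .
qed

lemma WW_pos: assumes "s > 0" shows "WW s > 0"
  using DD_pos[OF p n] assms unfolding WW_def by simp

lemma Rf_WW: "Rf n x p = (1 / \<bar>1 - p\<bar>) * sqrt ((WW (1-(1-p)*x))^2 - 1)"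
  using p1 unfolding Rf_def WW_def DD_def by simp

lemma DD_deriv: "(DD n p has_real_derivative gD s) (at s)"
  unfolding DD_def[abs_def] gD_def by (auto intro!: derivative_eq_intros)

lemma WW_deriv: assumes "s > 0" shows "(WW has_real_derivative WP s) (at s)"
proof -
  have D: "DD n p s \<noteq> 0" using DD_pos[OF p n, of s] assms by simp
  have "((\<lambda>s. s^(n-1) / DD n p s) has_real_derivative
      (real (n-1) * s^(n-1-Suc 0) * DD n p s - gD s * s^(n-1)) / (DD n p s ^ Suc (Suc 0))) (at s)"
    by (rule DERIV_quotient[OF DERIV_pow DD_deriv D])
  then show ?thesis unfolding WW_def[abs_def] WP_def by (simp add: power2_eq_square)
qed

lemma FF_cont: "continuous_on {0..1} FF"
proof -
  have "\<forall>x\<in>{0..1}. DD n p (1-(1-p)*x) > 0"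
    using DD_pos[OF p n] s_pos[OF p] less_imp_le by blast
  then have "\<forall>x\<in>{0..1}. DD n p (1-(1-p)*x) \<noteq> 0" by auto
  then show ?thesis unfolding FF_def WW_def WP_def gD_def DD_def
    by (intro continuous_intros) auto
qed

lemma Rf_deriv: assumes x: "x \<in> {0<..<1}"
  shows "((\<lambda>x. Rf n x p) has_real_derivative
     (1 / \<bar>1 - p\<bar>) * (inverse (sqrt ((WW (1-(1-p)*x))^2 - 1)) / 2 *
        (2 * WW (1-(1-p)*x) * WP (1-(1-p)*x) * (- (1 - p))))) (at x)"
proof -
  define s where "s = 1-(1-p)*x"
  have s: "s > 0" using s_pos[OF p, of x] x s_def by auto
  have G: "(WW s)^2 - 1 > 0"
    using W_eq[of x] x KK_pos[OF p n, of x] p1 unfolding s_def by simp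
  have d1: "((\<lambda>x. 1-(1-p)*x) has_real_derivative - (1-p)) (at x)"
    by (auto intro!: derivative_eq_intros)
  have d2: "((\<lambda>x. WW (1-(1-p)*x)) has_real_derivative WP s * - (1-p)) (at x)"
    using DERIV_chain2[OF WW_deriv[OF s, unfolded s_def] d1] unfolding s_def by simp
  have d3: "((\<lambda>x. (WW (1-(1-p)*x))^2 - 1) has_real_derivative 2 * WW s * WP s * - (1-p)) (at x)"
    using DERIV_diff[OF DERIV_power[OF d2, of 2] DERIV_const[of 1 "at x"]] unfolding s_def
    by (simp add: algebra_simps)
  have d4: "((\<lambda>x. sqrt ((WW (1-(1-p)*x))^2 - 1)) has_real_derivative
        inverse (sqrt ((WW s)^2 - 1)) / 2 * (2 * WW s * WP s * - (1-p))) (at x)"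
    using DERIV_chain2[OF DERIV_real_sqrt[OF G[unfolded s_def]] d3] unfolding s_def by simp
  have "((\<lambda>x. (1 / \<bar>1 - p\<bar>) * sqrt ((WW (1-(1-p)*x))^2 - 1)) has_real_derivative
        (1 / \<bar>1 - p\<bar>) * (inverse (sqrt ((WW s)^2 - 1)) / 2 * (2 * WW s * WP s * - (1-p)))) (at x)"
    by (rule DERIV_cmult[OF d4])
  then show ?thesis unfolding Rf_WW[symmetric] s_def by simp
qed

lemma V_deriv_int: assumes w: "w \<in> {0<..<PP n p}"
  shows "((\<lambda>w. (1-p) * Rf n (XX n p w) p) has_real_derivative FF (XX n p w)) (at w)"
proof -
  define x where "x = XX n p w"
  have x: "x \<in> {0<..<1}" using XX_interior[OF n p w] x_def by simp
  define s where "s = 1-(1-p)*x"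
  have s: "s > 0" using s_pos[OF p, of x] x s_def by auto
  have G: "(WW s)^2 - 1 > 0"
    using W_eq[of x] x KK_pos[OF p n, of x] p1 unfolding s_def by simp
  have "((\<lambda>w. (1-p) * Rf n (XX n p w) p) has_real_derivative
     (1-p) * ((1 / \<bar>1 - p\<bar>) * (inverse (sqrt ((WW s)^2 - 1)) / 2 *
        (2 * WW s * WP s * - (1 - p))) * - Rf n x p)) (at w)"
    using DERIV_cmult[OF DERIV_chain2[OF Rf_deriv[OF x, unfolded x_def] XX_deriv_int[OF n p w]], of "1-p"]
    unfolding x_def s_def by simp
  moreover have "(1-p) * ((1 / \<bar>1 - p\<bar>) * (inverse (sqrt ((WW s)^2 - 1)) / 2 *
        (2 * WW s * WP s * - (1 - p))) * - Rf n x p) = FF x"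
  proof -
    have r: "Rf n x p = (1 / \<bar>1 - p\<bar>) * sqrt ((WW s)^2 - 1)" using Rf_WW unfolding s_def by simp
    have sq: "sqrt ((WW s)^2 - 1) > 0" using G by simp
    define c where "c = 1 / \<bar>1 - p\<bar>"
    define q where "q = sqrt ((WW s)^2 - 1)"
    have a: "(1-p)^2 * c^2 = 1" unfolding c_def using p1 by (simp add: power_divide power2_abs)
    have b: "q * inverse q = 1" using sq unfolding q_def by simp
    have "(1-p) * ((1 / \<bar>1 - p\<bar>) * (inverse (sqrt ((WW s)^2 - 1)) / 2 *
        (2 * WW s * WP s * - (1 - p))) * - Rf n x p)
        = ((1-p)^2 * c^2) * (WW s * WP s) * (q * inverse q)"
      unfolding r c_def[symmetric] q_def[symmetric] by (simp add: algebra_simps power2_eq_square)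
    also have "\<dots> = WW s * WP s" unfolding a b by simp
    finally show ?thesis unfolding FF_def s_def .
  qed
  ultimately show ?thesis unfolding x_def by simp
qed

lemma FF_XX_cont: "continuous_on {0..PP n p} (\<lambda>w. FF (XX n p w))"
proof -
  have "XX n p ` {0..PP n p} \<subseteq> {0..1}" using XX_prop[OF n p] by blast
  then show ?thesis using continuous_on_compose2[OF FF_cont XX_cont[OF n p]] by blast
qed

lemma V_deriv: assumes w: "w \<in> {0..PP n p}"
  shows "((\<lambda>w. (1-p) * Rf n (XX n p w) p) has_real_derivative FF (XX n p w)) (at w within {0..PP n p})"
proof -
  have "continuous_on {0..PP n p} (\<lambda>w. (1-p) * Rf n (XX n p w) p)"
    using continuous_on_mult[OF continuous_on_const Rf_XX_cont[OF n p]] .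
  then show ?thesis by (rule deriv_limit[OF PP_pos[OF n p] _ FF_XX_cont V_deriv_int w])
qed

lemma alg: fixes s t D a W Q k :: real
  assumes "s>0" "t>0" "D>0" "a>0" "W = s*t/D"
  shows "- ((W * (((k+1) * t * D - Q*((k+2)*(s*t))*(s*t))/D^2)) / a) / W^3 + ((k+2) - 1)/(a * s*W) = (k+2)*Q/a"
  using assms(1-4) unfolding assms(5) by (simp add: field_simps power2_eq_square power3_eq_cube)

lemma H_eq: assumes x: "x \<in> {0..1}" and a: "a > 0"
  shows "Hcurv n (a * (1-(1-p)*x)) ((1-p) * Rf n x p) (FF x / a) = real n * Qf n p / a"
proof -
  obtain m where m: "n = m + 2" using n by (metis add.commute le_Suc_ex)
  define s where "s = 1-(1-p)*x"
  have s: "s > 0" using s_pos[OF p x] s_def by auto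
  define D where "D = DD n p s"
  have D: "D > 0" using DD_pos[OF p n] s D_def by simp
  define W where "W = WW s"
  have W: "W > 0" using WW_pos[OF s] W_def by simp
  have u1: "1 + ((1-p) * Rf n x p)^2 = W^2"
  proof -
    have "(Rf n x p)^2 = x*(1-x)*KK n p x"
      using Rf_eq[OF p n x] KK_pos[OF p n x] x by simp
    then show ?thesis using W_eq[OF x] unfolding W_def s_def by (simp add: power_mult_distrib)
  qed
  have sq: "sqrt (1 + ((1-p) * Rf n x p)^2) = W" using u1 W by simp
  have pw: "(1 + ((1-p) * Rf n x p)^2) powr (3/2) = W^3"
  proof -
    have "(W^2) powr (3/2) = (W powr 2) powr (3/2)" using W by (simp add: powr_realpow)
    also have "\<dots> = W powr 3" by (simp add: powr_powr)
    also have "\<dots> = W^3" using W powr_realpow[of W 3] by simp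
    finally show ?thesis using u1 by simp
  qed
  define t where "t = s^m"
  have t: "t > 0" using s t_def by simp
  have Wd: "W = s*t / D" unfolding W_def WW_def D_def t_def by (simp add: m)
  have FFe: "FF x = W * (((real m+1) * t * D - Qf n p * ((real m+2) * (s*t)) * (s*t)) / D^2)"
    unfolding FF_def WP_def gD_def s_def[symmetric] W_def[symmetric] D_def[symmetric] t_def by (simp add: m algebra_simps)
  have "Hcurv n (a * s) ((1-p) * Rf n x p) (FF x / a)
      = - (FF x / a) / W^3 + (real n - 1) / (a * s * W)"
    unfolding Hcurv_def pw sq by simp
  also have "\<dots> = real n * Qf n p / a"
    unfolding FFe using alg[OF s t D a Wd, of "real m" "Qf n p"] by (simp add: m)
  finally show ?thesis unfolding s_def .
qed

end



lemma img_scale: fixes a P :: real assumes a: "a > 0"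
  shows "(\<lambda>z. z/a) ` {0..a*P} = {0..P}"
proof
  show "(\<lambda>z. z/a) ` {0..a*P} \<subseteq> {0..P}"
  proof
    fix y assume "y \<in> (\<lambda>z. z/a) ` {0..a*P}"
    then obtain z where z: "z \<in> {0..a*P}" "y = z/a" by blast
    have "z/a \<le> (a*P)/a" using z a by (intro divide_right_mono) auto
    then show "y \<in> {0..P}" using z a by simp
  qed
  show "{0..P} \<subseteq> (\<lambda>z. z/a) ` {0..a*P}"
  proof
    fix w assume w: "w \<in> {0..P}"
    then have "a*w \<in> {0..a*P}" using a by (auto intro: mult_left_mono)
    moreover have "w = (a*w)/a" using a by simp
    ultimately show "w \<in> (\<lambda>z. z/a) ` {0..a*P}" by (rule rev_image_eqI)
  qed
qed

lemma deriv_scale: fixes a P :: real assumes a: "a > 0"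
  and d: "(f has_real_derivative f') (at (z/a) within {0..P})"
  shows "((\<lambda>z. f (z/a)) has_real_derivative f' / a) (at z within {0..a*P})"
proof -
  have g: "((\<lambda>z. z/a) has_real_derivative 1/a) (at z within {0..a*P})"
    using a by (auto intro!: derivative_eq_intros)
  have "(f \<circ> (\<lambda>z. z/a) has_real_derivative f' * (1/a)) (at z within {0..a*P})"
    by (rule DERIV_image_chain[OF _ g]) (use d img_scale[OF a, of P] in simp)
  then show ?thesis by (simp add: o_def)
qed

theorem proposition2p1:
  fixes n :: nat and d r t :: real
  assumes "n \<ge> 2" and "d > 0" and "r > 0" and "t > 0"
  shows "let L = Qf n r * Pf n r * d / (Qf n t * Pf n t) in
    \<exists>u1 u2 :: real \<Rightarrow> real.
      continuous_on {0..L} u2 \<and>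
      (\<forall>z\<in>{0..L}.
         uf n d z r t > 0 \<and>
         ((\<lambda>w. uf n d w r t) has_real_derivative u1 z) (at z within {0..L}) \<and>
         (u1 has_real_derivative u2 z) (at z within {0..L}) \<and>
         Hcurv n (uf n d z r t) (u1 z) (u2 z) = eta n d t) \<and>
      u1 0 = 0 \<and> u1 L = 0"
proof -
  note n = assms(1) and dpos = assms(2) and r = assms(3) and t = assms(4)
  have Pt: "Pf n t > 0" using Pf_pos[OF n t] .
  have Qt: "Qf n t > 0" using Q_pos[OF t n] .
  have Qr: "Qf n r > 0" using Q_pos[OF r n] .
  define a where "a = Qf n r * d / (Pf n t * Qf n t)"
  have a: "a > 0" unfolding a_def using Pt Qt Qr dpos by simp
  define L where "L = Qf n r * Pf n r * d / (Qf n t * Pf n t)"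
  have L: "L = a * Pf n r" unfolding L_def a_def by (simp add: field_simps)
  have arg: "Qf n t * Pf n t * z / (Qf n r * d) = z / a" for z
    unfolding a_def using Pt Qt Qr dpos by (simp add: field_simps)
  have ueq: "uf n d z r t = a * (1 - (1 - r) * XX n r (z / a))" for z
    unfolding uf_def arg by (simp add: XX_def[OF n r] a_def)
  have eta_eq: "eta n d t = real n * Qf n r / a"
    unfolding eta_def a_def using Pt Qt Qr dpos by (simp add: field_simps)
  show ?thesis
  proof (cases "r = 1")
    case True
    have uc: "uf n d z r t = a" for z using ueq[of z] True by simp
    have Q1: "Qf n r = (real n - 1) / real n" using True by (simp add: Qf_def)
    have H: "Hcurv n a 0 0 = eta n d t"
    proof -
      have "Hcurv n a 0 0 = (real n - 1) / a" by (simp add: Hcurv_def)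
      also have "\<dots> = real n * Qf n r / a" unfolding Q1 using n by simp
      finally show ?thesis using eta_eq by simp
    qed
    show ?thesis unfolding Let_def L_def[symmetric]
      apply (rule exI[of _ "\<lambda>_. 0"], rule exI[of _ "\<lambda>_. 0"])
      using a H unfolding uc by auto
  next
    case False
    define u1 where "u1 z = (1 - r) * Rf n (XX n r (z / a)) r" for z
    define u2 where "u2 z = FF n r (XX n r (z / a)) / a" for z
    have zin: "z / a \<in> {0..Pf n r}" if "z \<in> {0..L}" for z
      using that img_scale[OF a, of "Pf n r"] unfolding L by blast
    show ?thesis unfolding Let_def L_def[symmetric]
    proof (rule exI[where x=u1], rule exI[where x=u2], intro conjI ballI)
      have c1: "continuous_on {0..L} (\<lambda>z. z / a)" using a by (intro continuous_intros) auto
      have "continuous_on {0..L} (\<lambda>z. FF n r (XX n r (z / a)))"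
        using continuous_on_compose2[OF FF_XX_cont[OF n r False] c1] zin by blast
      then have "continuous_on {0..L} (\<lambda>z. FF n r (XX n r (z / a)) / a)"
        using a by (intro continuous_intros) auto
      then show "continuous_on {0..L} u2" unfolding u2_def[abs_def] .
    next
      fix z assume z: "z \<in> {0..L}"
      have w: "z / a \<in> {0..Pf n r}" using zin z .
      have x: "XX n r (z / a) \<in> {0..1}" using XX_prop[OF n r w] by simp
      show "uf n d z r t > 0" unfolding ueq using a s_pos[OF r x] by simp
      have d1: "((\<lambda>w. a * (1 - (1 - r) * XX n r w)) has_real_derivative
          a * (- (1 - r) * - Rf n (XX n r (z/a)) r)) (at (z/a) within {0..Pf n r})"
        using XX_deriv[OF n r w] by (auto intro!: derivative_eq_intros simp: algebra_simps)
      have e: "a * (- (1 - r) * - Rf n (XX n r (z/a)) r) / a = (1 - r) * Rf n (XX n r (z / a)) r"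
        using a by (simp add: field_simps)
      have "((\<lambda>z. a * (1 - (1 - r) * XX n r (z/a))) has_real_derivative (1 - r) * Rf n (XX n r (z / a)) r)
          (at z within {0..a * Pf n r})"
        using deriv_scale[OF a d1] unfolding e .
      then show "((\<lambda>w. uf n d w r t) has_real_derivative u1 z) (at z within {0..L})"
        unfolding ueq L u1_def .
      show "(u1 has_real_derivative u2 z) (at z within {0..L})"
        using deriv_scale[OF a V_deriv[OF n r False w]] unfolding L u1_def[abs_def] u2_def by simp
      show "Hcurv n (uf n d z r t) (u1 z) (u2 z) = eta n d t"
        unfolding ueq u1_def u2_def eta_eq using H_eq[OF n r False x a] .
    next
      show "u1 0 = 0" unfolding u1_def using XX_0[OF n r] Rf_0[OF r n] by simp
      show "u1 L = 0" unfolding u1_def L using a XX_P[OF n r] Rf_0[OF r n] by simp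
    qed
  qed
qed


end
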